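(* Let $\tilde{\mathcal D}$ be a finite set of examples, let $\mathrm{sim}:\tilde{\mathcal D}\times\tilde{\mathcal D}\to\mathbb{R}$, let $C:\tilde{\mathcal D}\to[0,\infty)$, let $\tau\ge 0$, and let $\sigma:[0,\infty)\to\mathbb{R}$ be non-decreasing and concave with $\sigma(0)=0$. For $\mathcal S\subseteq\tilde{\mathcal D}$ define $$OBJ(\mathcal S)=\sum_{x_i\in\tilde{\mathcal D}}\sigma\Big(\sum_{x_j\in\mathcal S}\mathbb 1_{[\mathrm{sim}(x_i,x_j)\ge\tau]}\,\mathrm{sim}(x_i,x_j)\,C(x_j)\Big).$$ Let $s\ge 1$, let $\mathcal S^*\in\arg\max_{\mathcal S\subseteq\tilde{\mathcal D},\,|\mathcal S|\le s}OBJ(\mathcal S)$, and let $\mathcal S$ be the greedy solution of size $s$, obtained by starting from $\emptyset$ and repeatedly adding an element $x\in\tilde{\mathcal D}\setminus\mathcal S$ maximizing $OBJ(\mathcal S\cup\{x\})-OBJ(\mathcal S)$ until $|\mathcal S|=s$. Then $$OBJ(\mathcal S)\ge(1-1/e)\cdot OBJ(\mathcal S^* ).$$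
   Context: In the paper, $\mathrm{sim}$ is the cosine similarity between embeddings of augmentations of two examples, $C$ is a prediction confidence (e.g. maximum softmax probability), $\tau$ is a neighborhood threshold and $\sigma$ is a utility function (e.g. the positive part of $\tanh$); $OBJ$ is the total reduced neighborhood confidence objective for data pruning. *)

theory Defs
  imports "HOL-Analysis.Analysis"
begin

definition OBJ :: "'a set \<Rightarrow> ('a \<Rightarrow> 'a \<Rightarrow> real) \<Rightarrow> ('a \<Rightarrow> real) \<Rightarrow> real
                   \<Rightarrow> (real \<Rightarrow> real) \<Rightarrow> 'a set \<Rightarrow> real" where
  "OBJ D sim C \<tau> \<sigma> S =
     (\<Sum>xi\<in>D. \<sigma> (\<Sum>xj\<in>S. (if sim xi xj \<ge> \<tau> then 1 else 0) * sim xi xj * C xj))"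

definition is_greedy_run :: "'a set \<Rightarrow> ('a set \<Rightarrow> real) \<Rightarrow> nat \<Rightarrow> 'a list \<Rightarrow> bool" where
  "is_greedy_run D f s xs \<longleftrightarrow>
     length xs = s \<and>
     (\<forall>k<s. xs ! k \<in> D - set (take k xs) \<and>
        (\<forall>y\<in>D - set (take k xs).
           f (insert y (set (take k xs))) - f (set (take k xs))
             \<le> f (insert (xs ! k) (set (take k xs))) - f (set (take k xs))))"

end

theory Submission
  imports Defs
begin

lemma concave_incr:
  fixes \<sigma> :: "real \<Rightarrow> real"
  assumes cc: "concave_on {0..} \<sigma>" and a: "0 \<le> a" "a \<le> b" "0 \<le> w"
  shows "\<sigma> (b + w) - \<sigma> b \<le> \<sigma> (a + w) - \<sigma> a"
proof (cases "b + w - a = 0")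
  case True then show ?thesis using a by (smt (verit))
next
  case False
  define L where "L = b + w - a"
  have L: "L > 0" using False a unfolding L_def by simp
  define t where "t = w / L"
  define u where "u = (b - a) / L"
  have t: "0 \<le> t" "t \<le> 1" using L a unfolding t_def L_def by (auto simp: field_simps)
  have u: "0 \<le> u" "u \<le> 1" using L a unfolding u_def L_def by (auto simp: field_simps)
  have tu: "t + u = 1"
  proof -
    have "t + u = (w + (b - a)) / L" unfolding t_def u_def by (simp add: add_divide_distrib)
    also have "w + (b - a) = L" unfolding L_def by simp
    finally show ?thesis using L by simp
  qed
  have tL: "t * L = w" using L by (simp add: t_def)
  have uL: "u * L = b - a" using L by (simp add: u_def)
  have e1: "(1 - t) *\<^sub>R a + t *\<^sub>R (b + w) = a + w"
  proof -
    have "(1 - t) *\<^sub>R a + t *\<^sub>R (b + w) = a + t * L" by (simp add: L_def algebra_simps)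
    then show ?thesis using tL by simp
  qed
  have e2: "(1 - u) *\<^sub>R a + u *\<^sub>R (b + w) = b"
  proof -
    have "(1 - u) *\<^sub>R a + u *\<^sub>R (b + w) = a + u * L" by (simp add: L_def algebra_simps)
    then show ?thesis using uL by simp
  qed
  have "\<sigma> (a + w) \<ge> (1 - t) * \<sigma> a + t * \<sigma> (b + w)"
    using concave_onD[OF cc t, of a "b+w"] a e1 by simp
  moreover have "\<sigma> b \<ge> (1 - u) * \<sigma> a + u * \<sigma> (b + w)"
    using concave_onD[OF cc u, of a "b+w"] a e2 by simp
  moreover have "(1 - t) * \<sigma> a + t * \<sigma> (b + w) + ((1 - u) * \<sigma> a + u * \<sigma> (b + w))
     = (2 - (t + u)) * \<sigma> a + (t + u) * \<sigma> (b + w)" by (simp add: algebra_simps)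
  ultimately show ?thesis using tu by simp
qed

theorem theorem4:
  fixes D :: "'a set" and sim :: "'a \<Rightarrow> 'a \<Rightarrow> real" and C :: "'a \<Rightarrow> real"
    and \<tau> :: real and \<sigma> :: "real \<Rightarrow> real" and s :: nat
    and Sstar :: "'a set" and xs :: "'a list"
  assumes "finite D"
    and "\<forall>x\<in>D. C x \<ge> 0"
    and "\<tau> \<ge> 0"
    and "mono_on {0..} \<sigma>" and "concave_on {0..} \<sigma>" and "\<sigma> 0 = 0"
    and "s \<ge> 1"
    and "Sstar \<subseteq> D" and "card Sstar \<le> s"
    and "\<forall>T. T \<subseteq> D \<and> card T \<le> s \<longrightarrow> OBJ D sim C \<tau> \<sigma> T \<le> OBJ D sim C \<tau> \<sigma> Sstar"
    and "is_greedy_run D (OBJ D sim C \<tau> \<sigma>) s xs"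
  shows "OBJ D sim C \<tau> \<sigma> (set xs) \<ge> (1 - 1 / exp 1) * OBJ D sim C \<tau> \<sigma> Sstar"
proof -
  note fin = assms(1) and Cnn = assms(2) and mo = assms(4) and cc = assms(5)
  define w where "w i j = (if sim i j \<ge> \<tau> then 1 else 0) * sim i j * C j" for i j
  define f where "f = OBJ D sim C \<tau> \<sigma>"
  have f_eq: "f S = (\<Sum>i\<in>D. \<sigma> (\<Sum>j\<in>S. w i j))" for S
    unfolding f_def OBJ_def w_def by simp
  have wnn: "w i j \<ge> 0" if "j \<in> D" for i j
    using Cnn that assms(3) unfolding w_def by auto
  have snn: "(\<Sum>j\<in>S. w i j) \<ge> 0" if "S \<subseteq> D" for S i
    using wnn that by (meson subsetD sum_nonneg)
  have ins: "(\<Sum>j\<in>insert y S. w i j) = w i y + (\<Sum>j\<in>S. w i j)"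
    if "S \<subseteq> D" "y \<notin> S" for S y i
    using that fin by (simp add: finite_subset)
  have gain_nn: "f (insert y S) - f S \<ge> 0" if "S \<subseteq> D" "y \<in> D" for S y
  proof (cases "y \<in> S")
    case True then show ?thesis by (simp add: insert_absorb)
  next
    case False
    have "f (insert y S) - f S = (\<Sum>i\<in>D. \<sigma> (w i y + (\<Sum>j\<in>S. w i j)) - \<sigma> (\<Sum>j\<in>S. w i j))"
      unfolding f_eq using ins[OF that(1) False] by (simp add: sum_subtractf)
    also have "\<dots> \<ge> 0"
    proof (rule sum_nonneg)
      fix i assume "i \<in> D"
      show "\<sigma> (w i y + (\<Sum>j\<in>S. w i j)) - \<sigma> (\<Sum>j\<in>S. w i j) \<ge> 0"
        using mo snn[OF that(1), of i] wnn[OF that(2), of i]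
        by (simp add: mono_on_def)
    qed
    finally show ?thesis by simp
  qed
  have submod: "f (insert y B) - f B \<le> f (insert y A) - f A"
    if "A \<subseteq> B" "B \<subseteq> D" "y \<in> D" "y \<notin> B" for A B y
  proof -
    have yA: "y \<notin> A" using that by auto
    have AD: "A \<subseteq> D" using that by auto
    have "f (insert y B) - f B = (\<Sum>i\<in>D. \<sigma> ((\<Sum>j\<in>B. w i j) + w i y) - \<sigma> (\<Sum>j\<in>B. w i j))"
      unfolding f_eq using ins[OF that(2) that(4)] by (simp add: sum_subtractf add.commute)
    also have "\<dots> \<le> (\<Sum>i\<in>D. \<sigma> ((\<Sum>j\<in>A. w i j) + w i y) - \<sigma> (\<Sum>j\<in>A. w i j))"
    proof (rule sum_mono)
      fix i assume "i \<in> D"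
      have "(\<Sum>j\<in>A. w i j) \<le> (\<Sum>j\<in>B. w i j)"
        using that fin wnn by (intro sum_mono2) (auto intro: finite_subset)
      then show "\<sigma> ((\<Sum>j\<in>B. w i j) + w i y) - \<sigma> (\<Sum>j\<in>B. w i j)
          \<le> \<sigma> ((\<Sum>j\<in>A. w i j) + w i y) - \<sigma> (\<Sum>j\<in>A. w i j)"
        using concave_incr[OF cc snn[OF AD, of i]] wnn[OF that(3), of i] by simp
    qed
    also have "\<dots> = f (insert y A) - f A"
      unfolding f_eq using ins[OF AD yA] by (simp add: sum_subtractf add.commute)
    finally show ?thesis .
  qed
  have fmono: "f A \<le> f B" if "A \<subseteq> B" "B \<subseteq> D" for A B
    unfolding f_eq
  proof (rule sum_mono)
    fix i assume "i \<in> D"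
    have "(\<Sum>j\<in>A. w i j) \<le> (\<Sum>j\<in>B. w i j)"
      using that fin wnn by (intro sum_mono2) (auto intro: finite_subset)
    moreover have "(\<Sum>j\<in>A. w i j) \<ge> 0" using snn that by auto
    ultimately show "\<sigma> (\<Sum>j\<in>A. w i j) \<le> \<sigma> (\<Sum>j\<in>B. w i j)"
      using mo by (auto simp: mono_on_def)
  qed
  have union: "f (A \<union> B) - f A \<le> (\<Sum>y\<in>B - A. f (insert y A) - f A)"
    if "A \<subseteq> D" "B \<subseteq> D" for A B
  proof -
    have "finite B" using that fin by (auto intro: finite_subset)
    then show ?thesis using that(2)
    proof (induction B rule: finite_induct)
      case empty then show ?case by simp
    next
      case (insert y B)
      have IH: "f (A \<union> B) - f A \<le> (\<Sum>y\<in>B - A. f (insert y A) - f A)"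
        using insert by auto
      have yD: "y \<in> D" using insert by auto
      show ?case
      proof (cases "y \<in> A")
        case True
        then have "A \<union> insert y B = A \<union> B" "insert y B - A = B - A" by auto
        then show ?thesis using IH by simp
      next
        case False
        have e: "A \<union> insert y B = insert y (A \<union> B)" by auto
        have "f (insert y (A \<union> B)) - f (A \<union> B) \<le> f (insert y A) - f A"
          using submod[of A "A \<union> B" y] insert that False yD by auto
        moreover have "(\<Sum>y\<in>insert y B - A. f (insert y A) - f A)
            = (f (insert y A) - f A) + (\<Sum>y\<in>B - A. f (insert y A) - f A)"
        proof -
          have "insert y B - A = insert y (B - A)" using False by auto
          moreover have "y \<notin> B - A" using insert by auto
          ultimately show ?thesis using insert by simp
        qed
        ultimately show ?thesis using IH e by simp
      qed
    qed
  qed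
  define S where "S k = set (take k xs)" for k
  define OPT where "OPT = f Sstar"
  have gr: "length xs = s" "\<And>k. k < s \<Longrightarrow> xs ! k \<in> D - S k \<and>
        (\<forall>y\<in>D - S k. f (insert y (S k)) - f (S k) \<le> f (insert (xs ! k) (S k)) - f (S k))"
    using assms(11) unfolding is_greedy_run_def S_def f_def by auto
  have SD: "S k \<subseteq> D" for k
  proof -
    have "x \<in> D" if xin: "x \<in> set (take k xs)" for x
    proof -
      obtain m where m: "m < length (take k xs)" "take k xs ! m = x"
        using xin[unfolded in_set_conv_nth] by blast
      then have "m < s" "m < k" "xs ! m = x" using gr(1) by auto
      then show ?thesis using gr(2)[of m] m by auto
    qed
    then show ?thesis unfolding S_def by auto
  qed
  have Ssuc: "S (Suc k) = insert (xs ! k) (S k)" if "k < s" for k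
    using that gr(1) unfolding S_def by (simp add: take_Suc_conv_app_nth)
  have step: "OPT - f (S (Suc k)) \<le> (1 - 1 / real s) * (OPT - f (S k))" if "k < s" for k
  proof -
    define \<delta> where "\<delta> = f (S (Suc k)) - f (S k)"
    have xk: "xs ! k \<in> D" using gr(2)[OF that] by auto
    have dnn: "\<delta> \<ge> 0" unfolding \<delta>_def Ssuc[OF that] using gain_nn[OF SD xk] .
    have "OPT \<le> f (S k \<union> Sstar)"
      unfolding OPT_def using fmono[of Sstar "S k \<union> Sstar"] SD assms(8) by auto
    also have "\<dots> \<le> f (S k) + (\<Sum>y\<in>Sstar - S k. f (insert y (S k)) - f (S k))"
      using union[OF SD[of k] assms(8)] by simp
    also have "\<dots> \<le> f (S k) + (\<Sum>y\<in>Sstar - S k. \<delta>)"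
      using gr(2)[OF that] assms(8) unfolding \<delta>_def Ssuc[OF that]
      by (intro add_left_mono sum_mono) auto
    also have "\<dots> = f (S k) + real (card (Sstar - S k)) * \<delta>" by simp
    also have "\<dots> \<le> f (S k) + real s * \<delta>"
    proof -
      have "card (Sstar - S k) \<le> card Sstar"
        using assms(8) fin by (intro card_mono) (auto intro: finite_subset)
      then have "real (card (Sstar - S k)) \<le> real s" using assms(9) by simp
      then show ?thesis using dnn by (simp add: mult_right_mono)
    qed
    finally have "OPT - f (S k) \<le> real s * \<delta>" by simp
    then show ?thesis using assms(7) unfolding \<delta>_def by (simp add: field_simps)
  qed
  have f0: "f (S 0) = 0" unfolding f_eq S_def using assms(6) by simp
  have iter: "OPT - f (S k) \<le> (1 - 1 / real s) ^ k * OPT" if "k \<le> s" for k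
    using that
  proof (induction k)
    case 0 then show ?case using f0 by simp
  next
    case (Suc k)
    have c: "0 \<le> 1 - 1 / real s" using assms(7) by simp
    have "OPT - f (S (Suc k)) \<le> (1 - 1 / real s) * (OPT - f (S k))"
      using step Suc by simp
    also have "\<dots> \<le> (1 - 1 / real s) * ((1 - 1 / real s) ^ k * OPT)"
      using Suc c by (intro mult_left_mono) auto
    finally show ?case by simp
  qed
  have OPTnn: "OPT \<ge> 0" using fmono[of "{}" Sstar] assms(8) f0 unfolding OPT_def S_def by simp
  have Sfin: "S s = set xs" unfolding S_def using gr(1) by simp
  have pw: "(1 - 1 / real s) ^ s \<le> 1 / exp 1"
  proof -
    have "(1 - 1 / real s) ^ s \<le> exp (- 1 / real s) ^ s"
      using assms(7) exp_ge_add_one_self[of "-1 / real s"] by (intro power_mono) auto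
    also have "\<dots> = exp (- 1)" using assms(7) by (simp add: exp_of_nat_mult[symmetric])
    finally show ?thesis by (simp add: exp_minus field_simps)
  qed
  have "OPT - f (set xs) \<le> (1 / exp 1) * OPT"
    using iter[of s] Sfin pw OPTnn mult_right_mono order_trans by fastforce
  then show ?thesis unfolding OPT_def f_def by (simp add: algebra_simps)
qed

end
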